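(* Let $\alpha>-1$ and let $\phi(w)=aw+b$ with $a>0$ and $\mathrm{Re}(b)=0$ (so $C_\phi$ is invertible on $\mathcal{A}^2_\alpha(\mathbb{C}_+)$). The following are equivalent: (i) $C_\phi$ is uniformly expansive on $\mathcal{A}^2_\alpha(\mathbb{C}_+)$; (ii) $C_\phi$ is expansive on $\mathcal{A}^2_\alpha(\mathbb{C}_+)$; (iii) $a\neq 1$.
   Context: $\mathbb{C}_+=\{z\in\mathbb{C}:\mathrm{Re}(z)>0\}$. For $\alpha>-1$, $\mathcal{A}^2_\alpha(\mathbb{C}_+)$ is the Hilbert space of analytic $f:\mathbb{C}_+\to\mathbb{C}$ with $\|f\|^2=\frac{1}{\pi}\int_{-\infty}^{\infty}\int_0^\infty |f(x+iy)|^2x^\alpha\,dx\,dy<\infty$. $C_\phi f=f\circ\phi$ is the composition operator. An invertible bounded operator $T$ on a Banach space $X$ is expansive if for each $x\in X$ with $\|x\|=1$ there is $n\in\mathbb{Z}$ with $\|T^nx\|\ge 2$; it is uniformly expansive if there exists $n\in\mathbb{N}$ such that for each $x$ with $\|x\|=1$, $\|T^nx\|\ge 2$ or $\|T^{-n}x\|\ge 2$. *)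

theory Defs
  imports "HOL-Analysis.Analysis"
begin

definition rhp :: "complex set" where
  "rhp = {z. 0 < Re z}"

definition bergman_sqnorm :: "real \<Rightarrow> (complex \<Rightarrow> complex) \<Rightarrow> ennreal" where
  "bergman_sqnorm \<alpha> f =
     ennreal (1 / pi) *
     (\<integral>\<^sup>+ y. (\<integral>\<^sup>+ x. indicator {0<..} x * ennreal ((cmod (f (Complex x y)))\<^sup>2 * x powr \<alpha>) \<partial>lborel) \<partial>lborel)"

definition bergman_space :: "real \<Rightarrow> (complex \<Rightarrow> complex) set" where
  "bergman_space \<alpha> = {f. f analytic_on rhp \<and> bergman_sqnorm \<alpha> f < \<infinity>}"

definition bergman_norm :: "real \<Rightarrow> (complex \<Rightarrow> complex) \<Rightarrow> real" where
  "bergman_norm \<alpha> f = sqrt (enn2real (bergman_sqnorm \<alpha> f))"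

definition comp_op :: "(complex \<Rightarrow> complex) \<Rightarrow> (complex \<Rightarrow> complex) \<Rightarrow> (complex \<Rightarrow> complex)" where
  "comp_op \<phi> f = f \<circ> \<phi>"

definition expansive :: "'a set \<Rightarrow> ('a \<Rightarrow> real) \<Rightarrow> ('a \<Rightarrow> 'a) \<Rightarrow> bool" where
  "expansive X N T \<longleftrightarrow>
     (\<forall>x\<in>X. N x = 1 \<longrightarrow>
        (\<exists>n::nat. N ((T ^^ n) x) \<ge> 2 \<or> N ((inv_into X T ^^ n) x) \<ge> 2))"

definition uniformly_expansive :: "'a set \<Rightarrow> ('a \<Rightarrow> real) \<Rightarrow> ('a \<Rightarrow> 'a) \<Rightarrow> bool" where
  "uniformly_expansive X N T \<longleftrightarrow>
     (\<exists>n::nat. n \<ge> 1 \<and> (\<forall>x\<in>X. N x = 1 \<longrightarrow>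
        N ((T ^^ n) x) \<ge> 2 \<or> N ((inv_into X T ^^ n) x) \<ge> 2))"

end

theory Submission
  imports Defs
begin

lemma nn_le_by_meas:
  fixes c :: ennreal
  assumes "\<And>g. g \<in> borel_measurable M \<Longrightarrow> (\<And>x. g x \<le> f x) \<Longrightarrow> c * integral\<^sup>N M g \<le> B"
  shows "c * integral\<^sup>N M f \<le> B"
proof -
  have "c * integral\<^sup>N M f = (SUP g \<in> {g. simple_function M g \<and> g \<le> f}. c * integral\<^sup>S M g)"
    unfolding nn_integral_def by (rule SUP_mult_left_ennreal)
  also have "\<dots> \<le> B"
  proof (rule SUP_least)
    fix g assume g: "g \<in> {g. simple_function M g \<and> g \<le> f}"
    then have "integral\<^sup>S M g = integral\<^sup>N M g" by (simp add: nn_integral_eq_simple_integral)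
    moreover have "c * integral\<^sup>N M g \<le> B"
      using g by (intro assms) (auto simp: borel_measurable_simple_function le_fun_def)
    ultimately show "c * integral\<^sup>S M g \<le> B" by simp
  qed
  finally show ?thesis .
qed

lemma nn_affine_ineq:
  fixes c t :: real
  assumes c: "c \<noteq> 0"
  shows "ennreal \<bar>c\<bar> * (\<integral>\<^sup>+x. f (t + c * x) \<partial>lborel) \<le> (\<integral>\<^sup>+x. f x \<partial>lborel)"
proof (rule nn_le_by_meas)
  fix g assume gm: "g \<in> borel_measurable lborel" and gle: "\<And>x. g x \<le> f (t + c * x)"
  define g' where "g' = (\<lambda>y. g ((y - t) / c))"
  have gb: "g \<in> borel_measurable borel" using gm by simp
  have g'm: "g' \<in> borel_measurable borel" unfolding g'_def
    by (rule measurable_compose[OF _ gb]) simp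
  have "(\<integral>\<^sup>+x. g' x \<partial>lborel) = ennreal \<bar>c\<bar> * (\<integral>\<^sup>+x. g' (t + c * x) \<partial>lborel)"
    by (rule nn_integral_real_affine[OF g'm c])
  also have "(\<lambda>x. g' (t + c * x)) = g" using c by (auto simp: g'_def)
  finally have "ennreal \<bar>c\<bar> * integral\<^sup>N lborel g = (\<integral>\<^sup>+x. g' x \<partial>lborel)" by simp
  also have "\<dots> \<le> (\<integral>\<^sup>+x. f x \<partial>lborel)"
  proof (rule nn_integral_mono)
    fix y have "g' y \<le> f (t + c * ((y - t) / c))" unfolding g'_def by (rule gle)
    also have "t + c * ((y - t) / c) = y" using c by simp
    finally show "g' y \<le> f y" .
  qed
  finally show "ennreal \<bar>c\<bar> * integral\<^sup>N lborel g \<le> (\<integral>\<^sup>+x. f x \<partial>lborel)" .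
qed

lemma nn_affine:
  fixes c t :: real
  assumes c: "c \<noteq> 0"
  shows "(\<integral>\<^sup>+x. f x \<partial>lborel) = ennreal \<bar>c\<bar> * (\<integral>\<^sup>+x. f (t + c * x) \<partial>lborel)"
proof (rule antisym)
  have c': "1 / c \<noteq> 0" using c by simp
  have "ennreal \<bar>1/c\<bar> * (\<integral>\<^sup>+x. f (t + c * (- t / c + 1 / c * x)) \<partial>lborel) \<le> (\<integral>\<^sup>+x. f (t + c * x) \<partial>lborel)"
    by (rule nn_affine_ineq[OF c', of "\<lambda>x. f (t + c * x)"])
  also have "(\<lambda>x. f (t + c * (- t / c + 1 / c * x))) = f" using c by (auto simp: field_simps)
  finally have "ennreal \<bar>1/c\<bar> * integral\<^sup>N lborel f \<le> (\<integral>\<^sup>+x. f (t + c * x) \<partial>lborel)" .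
  then have "ennreal \<bar>c\<bar> * (ennreal \<bar>1/c\<bar> * integral\<^sup>N lborel f) \<le> ennreal \<bar>c\<bar> * (\<integral>\<^sup>+x. f (t + c * x) \<partial>lborel)"
    by (rule mult_left_mono) simp
  also have "ennreal \<bar>c\<bar> * (ennreal \<bar>1/c\<bar> * integral\<^sup>N lborel f) = integral\<^sup>N lborel f"
    using c by (simp add: mult.assoc[symmetric] ennreal_mult[symmetric] abs_mult[symmetric])
  finally show "integral\<^sup>N lborel f \<le> ennreal \<bar>c\<bar> * (\<integral>\<^sup>+x. f (t + c * x) \<partial>lborel)" .
qed (rule nn_affine_ineq[OF c])

lemma nn_affine':
  fixes c t :: real
  assumes c: "c > 0"
  shows "(\<integral>\<^sup>+x. f (t + c * x) \<partial>lborel) = ennreal (1 / c) * (\<integral>\<^sup>+x. f x \<partial>lborel)"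
proof -
  have "ennreal (1 / c) * (\<integral>\<^sup>+x. f x \<partial>lborel) = ennreal (1/c) * (ennreal c * (\<integral>\<^sup>+x. f (t + c * x) \<partial>lborel))"
    using nn_affine[of c f t] c by simp
  also have "\<dots> = (\<integral>\<^sup>+x. f (t + c * x) \<partial>lborel)"
    using c by (simp add: mult.assoc[symmetric] ennreal_mult[symmetric])
  finally show ?thesis by simp
qed

lemma nn_cmult_ineq:
  fixes r :: real
  assumes r: "r > 0"
  shows "ennreal r * integral\<^sup>N M f \<le> (\<integral>\<^sup>+x. ennreal r * f x \<partial>M)"
proof (rule nn_le_by_meas)
  fix g assume gm: "g \<in> borel_measurable M" and gle: "\<And>x. g x \<le> f x"
  have "ennreal r * integral\<^sup>N M g = (\<integral>\<^sup>+x. ennreal r * g x \<partial>M)"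
    using gm by (simp add: nn_integral_cmult)
  also have "\<dots> \<le> (\<integral>\<^sup>+x. ennreal r * f x \<partial>M)"
    by (intro nn_integral_mono mult_left_mono gle) simp
  finally show "ennreal r * integral\<^sup>N M g \<le> (\<integral>\<^sup>+x. ennreal r * f x \<partial>M)" .
qed

lemma nn_cmult_free:
  fixes r :: real
  assumes r: "r > 0"
  shows "(\<integral>\<^sup>+x. ennreal r * f x \<partial>M) = ennreal r * integral\<^sup>N M f"
proof (rule antisym)
  have "ennreal (1/r) * (\<integral>\<^sup>+x. ennreal r * f x \<partial>M) \<le> (\<integral>\<^sup>+x. ennreal (1/r) * (ennreal r * f x) \<partial>M)"
    using r by (intro nn_cmult_ineq) simp
  also have "(\<lambda>x. ennreal (1/r) * (ennreal r * f x)) = f"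
    using r by (simp add: mult.assoc[symmetric] ennreal_mult[symmetric])
  finally have "ennreal r * (ennreal (1/r) * (\<integral>\<^sup>+x. ennreal r * f x \<partial>M)) \<le> ennreal r * integral\<^sup>N M f"
    by (rule mult_left_mono) simp
  then show "(\<integral>\<^sup>+x. ennreal r * f x \<partial>M) \<le> ennreal r * integral\<^sup>N M f"
    using r by (simp add: mult.assoc[symmetric] ennreal_mult[symmetric])
qed (rule nn_cmult_ineq[OF r])


lemma complex_affine_eq:
  assumes "Re b = 0"
  shows "of_real a * Complex x y + b = Complex (a * x) (a * y + Im b)"
  using assms by (simp add: complex_eq_iff)

lemma sqnorm_comp:
  fixes a :: real and b :: complex
  assumes a: "a > 0" and b: "Re b = 0"
  shows "bergman_sqnorm \<alpha> (f \<circ> (\<lambda>w. of_real a * w + b)) = ennreal (a powr (-(\<alpha>+2))) * bergman_sqnorm \<alpha> f"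
proof -
  define G where "G = (\<lambda>y u. indicator {0<..} u * ennreal ((cmod (f (Complex u y)))\<^sup>2 * u powr \<alpha>) :: ennreal)"
  define I where "I = (\<lambda>y. \<integral>\<^sup>+u. G y u \<partial>lborel)"
  have pt: "indicator {0<..} x * ennreal ((cmod ((f \<circ> (\<lambda>w. of_real a * w + b)) (Complex x y)))\<^sup>2 * x powr \<alpha>)
      = ennreal (a powr (-\<alpha>)) * G (Im b + a * y) (0 + a * x)" for x y
  proof (cases "x > 0")
    case True
    have "(a * x) powr \<alpha> = a powr \<alpha> * x powr \<alpha>" using a True by (simp add: powr_mult)
    then have "a powr (-\<alpha>) * ((cmod (f (Complex (a * x) (Im b + a * y))))\<^sup>2 * (a * x) powr \<alpha>)
       = (cmod (f (Complex (a * x) (Im b + a * y))))\<^sup>2 * x powr \<alpha>"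
      using a by (simp add: powr_minus field_simps)
    moreover have ceq: "of_real a * Complex x y + b = Complex (a * x) (Im b + a * y)"
      using b by (simp add: complex_eq_iff)
    ultimately show ?thesis using True a
      by (simp add: G_def ennreal_mult[symmetric] add.commute) metis
  next
    case False
    then show ?thesis using a by (simp add: G_def indicator_def zero_less_mult_iff)
  qed
  have inner: "(\<integral>\<^sup>+x. indicator {0<..} x * ennreal ((cmod ((f \<circ> (\<lambda>w. of_real a * w + b)) (Complex x y)))\<^sup>2 * x powr \<alpha>) \<partial>lborel)
      = ennreal (a powr (-\<alpha>) / a) * I (Im b + a * y)" for y
  proof -
    have "(\<integral>\<^sup>+x. indicator {0<..} x * ennreal ((cmod ((f \<circ> (\<lambda>w. of_real a * w + b)) (Complex x y)))\<^sup>2 * x powr \<alpha>) \<partial>lborel)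
       = (\<integral>\<^sup>+x. ennreal (a powr (-\<alpha>)) * G (Im b + a * y) (0 + a * x) \<partial>lborel)"
      by (simp only: pt)
    also have "\<dots> = ennreal (a powr (-\<alpha>)) * (\<integral>\<^sup>+x. G (Im b + a * y) (0 + a * x) \<partial>lborel)"
      using a by (intro nn_cmult_free) simp
    also have "\<dots> = ennreal (a powr (-\<alpha>)) * (ennreal (1/a) * I (Im b + a * y))"
      unfolding I_def using a by (simp only: nn_affine')
    also have "\<dots> = ennreal (a powr (-\<alpha>) / a) * I (Im b + a * y)"
      using a by (simp add: mult.assoc[symmetric] ennreal_mult[symmetric])
    finally show ?thesis .
  qed
  have "bergman_sqnorm \<alpha> (f \<circ> (\<lambda>w. of_real a * w + b))
      = ennreal (1/pi) * (\<integral>\<^sup>+y. ennreal (a powr (-\<alpha>) / a) * I (Im b + a * y) \<partial>lborel)"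
    unfolding bergman_sqnorm_def by (simp only: inner)
  also have "\<dots> = ennreal (1/pi) * (ennreal (a powr (-\<alpha>) / a) * (ennreal (1/a) * (\<integral>\<^sup>+y. I y \<partial>lborel)))"
    using a by (simp only: nn_cmult_free nn_affine' divide_pos_pos powr_gt_zero)
  also have "\<dots> = ennreal (a powr (-\<alpha>) / a * (1/a)) * (ennreal (1/pi) * (\<integral>\<^sup>+y. I y \<partial>lborel))"
  proof -
    have "ennreal (a powr (-\<alpha>) / a * (1/a)) = ennreal (a powr (-\<alpha>) / a) * ennreal (1/a)"
      using a by (intro ennreal_mult) auto
    then show ?thesis by (simp only: mult_ac)
  qed
  also have "a powr (-\<alpha>) / a * (1/a) = a powr (-(\<alpha>+2))"
  proof -
    have "a powr (-(\<alpha>+2)) = a powr (-\<alpha> - 2)" by simp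
    also have "\<dots> = a powr (-\<alpha>) / a powr 2" by (rule powr_diff)
    also have "a powr 2 = a * a" using a by (simp add: power2_eq_square)
    finally show ?thesis by simp
  qed
  also have "ennreal (1/pi) * (\<integral>\<^sup>+y. I y \<partial>lborel) = bergman_sqnorm \<alpha> f"
    unfolding bergman_sqnorm_def I_def G_def ..
  finally show ?thesis .
qed


lemma norm_comp:
  fixes a :: real and b :: complex
  assumes a: "a > 0" and b: "Re b = 0"
  shows "bergman_norm \<alpha> (comp_op (\<lambda>w. of_real a * w + b) f) = sqrt (a powr (-(\<alpha>+2))) * bergman_norm \<alpha> f"
  unfolding bergman_norm_def comp_op_def sqnorm_comp[OF a b]
  by (simp add: enn2real_mult real_sqrt_mult)

lemma space_comp:
  fixes a :: real and b :: complex
  assumes a: "a > 0" and b: "Re b = 0" and f: "f \<in> bergman_space \<alpha>"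
  shows "comp_op (\<lambda>w. of_real a * w + b) f \<in> bergman_space \<alpha>"
proof -
  have an: "f analytic_on rhp" and fin: "bergman_sqnorm \<alpha> f < \<infinity>" using f by (auto simp: bergman_space_def)
  have "f \<circ> (\<lambda>w. of_real a * w + b) analytic_on rhp"
  proof (rule analytic_on_compose_gen[OF _ an])
    show "(\<lambda>w. of_real a * w + b) analytic_on rhp" by (intro analytic_intros)
    fix z assume "z \<in> rhp" then show "of_real a * z + b \<in> rhp" using a b by (simp add: rhp_def)
  qed
  moreover have "bergman_sqnorm \<alpha> (f \<circ> (\<lambda>w. of_real a * w + b)) < \<infinity>"
    using fin by (simp add: sqnorm_comp[OF a b] ennreal_mult_less_top)
  ultimately show ?thesis by (simp add: bergman_space_def comp_op_def)
qed

lemma iter_comp: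
  fixes a :: real and b :: complex
  assumes a: "a > 0" and b: "Re b = 0"
    and S: "\<And>g. g \<in> bergman_space \<alpha> \<Longrightarrow> S g = comp_op (\<lambda>w. of_real a * w + b) g"
    and g: "g \<in> bergman_space \<alpha>"
  shows "(S ^^ n) g \<in> bergman_space \<alpha> \<and> bergman_norm \<alpha> ((S ^^ n) g) = sqrt (a powr (-(\<alpha>+2))) ^ n * bergman_norm \<alpha> g"
proof (induction n)
  case 0 then show ?case using g by simp
next
  case (Suc n)
  then show ?case using S[of "(S ^^ n) g"] space_comp[OF a b] norm_comp[OF a b] by simp
qed

lemma inv_comp:
  fixes a :: real and b :: complex
  assumes a: "a > 0" and b: "Re b = 0" and g: "g \<in> bergman_space \<alpha>"
  shows "inv_into (bergman_space \<alpha>) (comp_op (\<lambda>w. of_real a * w + b)) g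
       = comp_op (\<lambda>w. of_real (1/a) * w + (- b / of_real a)) g"
proof (rule inv_into_f_eq)
  have an: "(of_real a :: complex) \<noteq> 0" using a by simp
  have e1: "of_real (1/a) * of_real a = (1::complex)" and e1': "of_real a * of_real (1/a) = (1::complex)"
    using a by (simp_all flip: of_real_mult)
  have e2: "of_real (1/a) * b = b / of_real a" by (simp add: divide_inverse of_real_inverse mult.commute)
  have e3: "of_real a * (b / of_real a) = b" using an by simp
  have ia: "\<And>w. of_real (1/a) * (of_real a * w + b) + (- b / of_real a) = w"
    using a by (simp add: distrib_left mult.assoc[symmetric] e1 e2)
  have ib: "\<And>w. of_real a * (of_real (1/a) * w + (- b / of_real a)) + b = w"
    using an by (simp add: right_diff_distrib)
  show "inj_on (comp_op (\<lambda>w. of_real a * w + b)) (bergman_space \<alpha>)"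
  proof (rule inj_onI)
    fix f h assume fh: "comp_op (\<lambda>w. of_real a * w + b) f = comp_op (\<lambda>w. of_real a * w + b) h"
    show "f = h"
    proof
      fix z
      have "f (of_real a * (of_real (1/a) * z + (- b / of_real a)) + b) = h (of_real a * (of_real (1/a) * z + (- b / of_real a)) + b)"
        using fun_cong[OF fh] by (simp add: comp_op_def)
      then show "f z = h z" by (simp only: ib)
    qed
  qed
  have b': "Re (- b / of_real a) = 0" using b by simp
  show "comp_op (\<lambda>w. of_real (1/a) * w + (- b / of_real a)) g \<in> bergman_space \<alpha>"
    by (rule space_comp) (use a b' g in auto)
  show "comp_op (\<lambda>w. of_real a * w + b) (comp_op (\<lambda>w. of_real (1/a) * w + (- b / of_real a)) g) = g"
    unfolding comp_op_def o_def ia by simp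
qed



lemma cauchy_half: "(\<integral>\<^sup>+y. ennreal (1 / (1 + y\<^sup>2)) * indicator {0..} y \<partial>lborel) = ennreal (pi / 2)"
proof -
  have "(\<integral>\<^sup>+y. ennreal (1 / (1 + y\<^sup>2)) * indicator {0..} y \<partial>lborel) = pi / 2 - arctan 0"
  proof (rule nn_integral_FTC_atLeast)
    show "(\<lambda>y::real. 1 / (1 + y\<^sup>2)) \<in> borel_measurable borel" by measurable
    fix x :: real
    show "DERIV arctan x :> 1 / (1 + x\<^sup>2)"
      using DERIV_arctan[of x] by (simp add: divide_inverse)
    show "0 \<le> 1 / (1 + x\<^sup>2)" by (simp add: add_pos_nonneg)
  qed (rule tendsto_arctan_at_top)
  then show ?thesis by simp
qed

lemma cauchy_fin: "(\<integral>\<^sup>+y. ennreal (1 / (1 + y\<^sup>2)) \<partial>lborel) < \<infinity>"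
proof -
  define q where "q = (\<lambda>y::real. ennreal (1 / (1 + y\<^sup>2)) * indicator {0..} y)"
  have qm: "q \<in> borel_measurable lborel" unfolding q_def by measurable
  have qm': "(\<lambda>y. q (0 + (-1) * y)) \<in> borel_measurable lborel" unfolding q_def by measurable
  have "(\<integral>\<^sup>+y. ennreal (1 / (1 + y\<^sup>2)) \<partial>lborel) \<le> (\<integral>\<^sup>+y. q y + q (0 + (-1) * y) \<partial>lborel)"
    by (intro nn_integral_mono) (auto simp: q_def indicator_def)
  also have "\<dots> = (\<integral>\<^sup>+y. q y \<partial>lborel) + (\<integral>\<^sup>+y. q (0 + (-1) * y) \<partial>lborel)"
    using qm qm' by (rule nn_integral_add)
  also have "(\<integral>\<^sup>+y. q (0 + (-1) * y) \<partial>lborel) = (\<integral>\<^sup>+y. q y \<partial>lborel)"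
    using nn_affine[of "-1" q 0] by simp
  also have "(\<integral>\<^sup>+y. q y \<partial>lborel) = ennreal (pi / 2)" unfolding q_def by (rule cauchy_half)
  finally show ?thesis by (simp add: order_le_less_trans ennreal_plus[symmetric] del: ennreal_plus)
qed

lemma sqnorm_scale:
  fixes c :: complex
  assumes c: "c \<noteq> 0"
  shows "bergman_sqnorm \<alpha> (\<lambda>z. c * f z) = ennreal ((cmod c)\<^sup>2) * bergman_sqnorm \<alpha> f"
proof -
  have r: "(cmod c)\<^sup>2 > 0" using c by simp
  have pt: "indicator {0<..} x * ennreal ((cmod (c * f (Complex x y)))\<^sup>2 * x powr \<alpha>)
     = ennreal ((cmod c)\<^sup>2) * (indicator {0<..} x * ennreal ((cmod (f (Complex x y)))\<^sup>2 * x powr \<alpha>))" for x y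
    by (simp add: norm_mult power_mult_distrib ennreal_mult mult_ac)
  have inner: "(\<integral>\<^sup>+x. indicator {0<..} x * ennreal ((cmod (c * f (Complex x y)))\<^sup>2 * x powr \<alpha>) \<partial>lborel)
     = ennreal ((cmod c)\<^sup>2) * (\<integral>\<^sup>+x. indicator {0<..} x * ennreal ((cmod (f (Complex x y)))\<^sup>2 * x powr \<alpha>) \<partial>lborel)" for y
    unfolding pt by (rule nn_cmult_free[OF r])
  show ?thesis
    unfolding bergman_sqnorm_def inner nn_cmult_free[OF r] by (simp only: mult_ac)
qed

definition hh :: "complex \<Rightarrow> complex" where
  "hh z = exp (- z / 2) / (z + 1)"

lemma hh_sq: "(cmod (hh (Complex x y)))\<^sup>2 = exp (- x) / ((x + 1)\<^sup>2 + y\<^sup>2)"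
proof -
  have "cmod (exp (- Complex x y / 2)) = exp (- x / 2)" by (simp add: norm_exp_eq_Re)
  moreover have "(cmod (Complex x y + 1))\<^sup>2 = (x + 1)\<^sup>2 + y\<^sup>2"
  proof -
    have "Complex x y + 1 = Complex (x + 1) y" by (simp add: complex_eq_iff)
    then show ?thesis by (simp add: cmod_power2)
  qed
  moreover have "(exp (- x / 2))\<^sup>2 = exp (- x)"
    by (simp add: power2_eq_square mult_exp_exp)
  ultimately show ?thesis by (simp add: hh_def norm_divide power_divide)
qed

lemma hh_analytic: "hh analytic_on rhp"
proof -
  have "\<And>z. z \<in> rhp \<Longrightarrow> z + 1 \<noteq> 0"
    by (auto simp: rhp_def complex_eq_iff)
  then show ?thesis unfolding hh_def by (auto intro!: analytic_intros)
qed

lemma hh_fin: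
  assumes al: "\<alpha> > -1"
  shows "bergman_sqnorm \<alpha> hh < \<infinity>"
proof -
  define P where "P = (\<lambda>y::real. ennreal (1 / (1 + y\<^sup>2)))"
  define Q where "Q = (\<lambda>x::real. ennreal (indicator {0..} x * x powr (\<alpha> + 1 - 1) / exp x))"
  have gpos: "Gamma (\<alpha> + 1) > 0" using al by (intro Gamma_real_pos) simp
  have Qint: "(\<integral>\<^sup>+x. Q x \<partial>lborel) = ennreal (Gamma (\<alpha> + 1))"
    unfolding Q_def using Gamma_conv_nn_integral_real[of "\<alpha> + 1"] al by simp
  have pt: "indicator {0<..} x * ennreal ((cmod (hh (Complex x y)))\<^sup>2 * x powr \<alpha>) \<le> P y * Q x" for x y
  proof (cases "x > 0")
    case True
    have "exp (- x) / ((x + 1)\<^sup>2 + y\<^sup>2) * x powr \<alpha> \<le> 1 / (1 + y\<^sup>2) * (x powr \<alpha> / exp x)"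
    proof -
      have "exp (- x) / ((x + 1)\<^sup>2 + y\<^sup>2) \<le> exp (- x) / (1 + y\<^sup>2)"
        using True by (intro divide_left_mono) (auto simp: add_pos_nonneg power_le_one_iff one_le_power)
      then have "exp (- x) / ((x + 1)\<^sup>2 + y\<^sup>2) * x powr \<alpha> \<le> exp (- x) / (1 + y\<^sup>2) * x powr \<alpha>"
        by (intro mult_right_mono) auto
      also have "\<dots> = 1 / (1 + y\<^sup>2) * (x powr \<alpha> / exp x)" by (simp add: exp_minus field_simps)
      finally show ?thesis .
    qed
    then show ?thesis using True
      by (simp add: P_def Q_def hh_sq ennreal_mult[symmetric] ennreal_leI)
  next
    case False then show ?thesis by simp
  qed
  have "bergman_sqnorm \<alpha> hh \<le> ennreal (1/pi) * (\<integral>\<^sup>+y. (\<integral>\<^sup>+x. P y * Q x \<partial>lborel) \<partial>lborel)"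
    unfolding bergman_sqnorm_def
    by (intro mult_left_mono nn_integral_mono pt) auto
  also have "(\<lambda>y. \<integral>\<^sup>+x. P y * Q x \<partial>lborel) = (\<lambda>y. ennreal (Gamma (\<alpha> + 1)) * P y)"
  proof
    fix y
    have "(\<integral>\<^sup>+x. P y * Q x \<partial>lborel) = P y * ennreal (Gamma (\<alpha> + 1))"
      unfolding P_def by (simp add: nn_cmult_free add_pos_nonneg Qint)
    then show "(\<integral>\<^sup>+x. P y * Q x \<partial>lborel) = ennreal (Gamma (\<alpha> + 1)) * P y" by (simp add: mult.commute)
  qed
  also have "(\<integral>\<^sup>+y. ennreal (Gamma (\<alpha> + 1)) * P y \<partial>lborel) = ennreal (Gamma (\<alpha> + 1)) * (\<integral>\<^sup>+y. P y \<partial>lborel)"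
    using gpos by (rule nn_cmult_free)
  also have "ennreal (1/pi) * (ennreal (Gamma (\<alpha> + 1)) * (\<integral>\<^sup>+y. P y \<partial>lborel)) < \<infinity>"
    using cauchy_fin unfolding P_def by (simp add: ennreal_mult_less_top)
  finally show ?thesis .
qed

lemma hh_pos:
  assumes al: "\<alpha> > -1"
  shows "bergman_sqnorm \<alpha> hh \<noteq> 0"
proof -
  define c :: real where "c = exp (-2) / 20"
  have cpos: "c > 0" by (simp add: c_def)
  have pt: "(ennreal c * indicator {0..1} y) * indicator {1..2} x
      \<le> indicator {0<..} x * ennreal ((cmod (hh (Complex x y)))\<^sup>2 * x powr \<alpha>)" for x y :: real
  proof (cases "x \<in> {1..2} \<and> y \<in> {0..1}")
    case True
    then have x: "1 \<le> x" "x \<le> 2" and y: "0 \<le> y" "y \<le> 1" by auto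
    have xp: "x powr \<alpha> \<ge> 1/2"
    proof (cases "\<alpha> \<ge> 0")
      case True then show ?thesis using ge_one_powr_ge_zero[of x \<alpha>] x by linarith
    next
      case False
      have "2 powr (-1) \<le> 2 powr \<alpha>" using al by (intro powr_mono) auto
      also have "2 powr \<alpha> \<le> x powr \<alpha>" using False x by (intro powr_mono2') auto
      finally show ?thesis by (simp add: powr_minus)
    qed
    have e: "exp (-2) \<le> exp (- x)" using x by simp
    have d: "(x + 1)\<^sup>2 + y\<^sup>2 \<le> 10"
    proof -
      have "(x + 1)\<^sup>2 \<le> 3\<^sup>2" using x by (intro power_mono) auto
      moreover have "y\<^sup>2 \<le> 1" using y by (simp add: power_le_one)
      ultimately show ?thesis by simp
    qed
    have dpos: "(x + 1)\<^sup>2 + y\<^sup>2 > 0" using x by (simp add: add_pos_nonneg)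
    have "exp (-2) / 10 \<le> exp (- x) / ((x + 1)\<^sup>2 + y\<^sup>2)"
      using e d dpos by (intro frac_le) auto
    then have "exp (-2) / 10 * (1/2) \<le> exp (- x) / ((x + 1)\<^sup>2 + y\<^sup>2) * x powr \<alpha>"
      using xp by (intro mult_mono) auto
    then have "c \<le> (cmod (hh (Complex x y)))\<^sup>2 * x powr \<alpha>" by (simp add: c_def hh_sq)
    then show ?thesis using True by (simp add: ennreal_leI)
  next
    case False then show ?thesis by (auto simp: indicator_def)
  qed
  have "ennreal (1/pi) * (\<integral>\<^sup>+y. (\<integral>\<^sup>+x. (ennreal c * indicator {0..1::real} y) * indicator {1..2::real} x \<partial>lborel) \<partial>lborel)
     \<le> bergman_sqnorm \<alpha> hh"
    unfolding bergman_sqnorm_def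
    by (intro mult_left_mono nn_integral_mono pt) auto
  moreover have "(\<integral>\<^sup>+y. (\<integral>\<^sup>+x. (ennreal c * indicator {0..1::real} y) * indicator {1..2::real} x \<partial>lborel) \<partial>lborel) = ennreal c"
    by (simp add: nn_integral_cmult_indicator)
  ultimately have "ennreal (1/pi) * ennreal c \<le> bergman_sqnorm \<alpha> hh" by simp
  moreover have "ennreal (1/pi) * ennreal c > 0" using cpos by (simp add: ennreal_mult[symmetric])
  ultimately show ?thesis by auto
qed

lemma unit_vector:
  assumes al: "\<alpha> > -1"
  shows "\<exists>g\<in>bergman_space \<alpha>. bergman_norm \<alpha> g = 1"
proof -
  define s where "s = enn2real (bergman_sqnorm \<alpha> hh)"
  have fin: "bergman_sqnorm \<alpha> hh < \<infinity>" by (rule hh_fin[OF al])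
  have eq: "bergman_sqnorm \<alpha> hh = ennreal s" using fin unfolding s_def by (simp add: ennreal_enn2real_if)
  have s0: "s \<ge> 0" unfolding s_def by simp
  have "s \<noteq> 0" using hh_pos[OF al] eq by auto
  then have spos: "s > 0" using s0 by simp
  define c :: complex where "c = of_real (1 / sqrt s)"
  have c0: "c \<noteq> 0" using spos by (simp add: c_def)
  have "(cmod c)\<^sup>2 = (1 / sqrt s)\<^sup>2" by (simp only: c_def norm_of_real power2_abs)
  then have cs: "(cmod c)\<^sup>2 = 1 / s" using spos by (simp add: power_divide)
  define g where "g = (\<lambda>z. c * hh z)"
  have sq: "bergman_sqnorm \<alpha> g = ennreal (1 / s * s)"
    unfolding g_def sqnorm_scale[OF c0] cs eq using spos by (simp add: ennreal_mult[symmetric])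
  have "g \<in> bergman_space \<alpha>"
    unfolding bergman_space_def using sq hh_analytic
    by (auto simp: g_def intro!: analytic_intros)
  moreover have "bergman_norm \<alpha> g = 1" unfolding bergman_norm_def sq using spos by simp
  ultimately show ?thesis by blast
qed


theorem mainTheorem5:
  fixes \<alpha> a :: real and b :: complex
  assumes "\<alpha> > -1" and "a > 0" and "Re b = 0"
  shows "(uniformly_expansive (bergman_space \<alpha>) (bergman_norm \<alpha>) (comp_op (\<lambda>w. of_real a * w + b))
            \<longleftrightarrow> expansive (bergman_space \<alpha>) (bergman_norm \<alpha>) (comp_op (\<lambda>w. of_real a * w + b)))
       \<and> (expansive (bergman_space \<alpha>) (bergman_norm \<alpha>) (comp_op (\<lambda>w. of_real a * w + b))
            \<longleftrightarrow> a \<noteq> 1)"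
proof -
  note a = \<open>a > 0\<close> and b = \<open>Re b = 0\<close>
  define X where "X = bergman_space \<alpha>"
  define N where "N = bergman_norm \<alpha>"
  define T where "T = comp_op (\<lambda>w. of_real a * w + b)"
  define q where "q = sqrt (a powr (-(\<alpha>+2)))"
  define q' where "q' = sqrt ((1/a) powr (-(\<alpha>+2)))"
  have b': "Re (- b / of_real a) = 0" using b by simp
  have fw: "\<And>n g. g \<in> X \<Longrightarrow> N ((T ^^ n) g) = q ^ n * N g"
    unfolding X_def N_def T_def q_def using iter_comp[OF a b] by blast
  have bw: "\<And>n g. g \<in> X \<Longrightarrow> N ((inv_into X T ^^ n) g) = q' ^ n * N g"
    unfolding X_def N_def T_def q'_def using iter_comp[OF _ b', of "1/a"] inv_comp[OF a b] a by simp
  have ue_e: "uniformly_expansive X N T \<Longrightarrow> expansive X N T"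
    unfolding uniformly_expansive_def expansive_def by blast
  have ue: "uniformly_expansive X N T" if "a \<noteq> 1"
  proof -
    have ex: "\<exists>n::nat. n \<ge> 1 \<and> 2 \<le> r ^ n" if r1: "r > 1" for r :: real
    proof -
      obtain n where n: "2 < r ^ n" using real_arch_pow[OF r1, of 2] by blast
      have "n \<noteq> 0" using n by (cases n) auto
      then show ?thesis using n by (intro exI[of _ n]) auto
    qed
    have gt: "c powr (-(\<alpha>+2)) > 1" if c0: "0 < c" and c1: "c < 1" for c :: real
    proof -
      have "1 < (1/c) powr (\<alpha>+2)" using c0 c1 \<open>\<alpha> > -1\<close> by (intro gr_one_powr) (auto simp: field_simps)
      also have "(1/c) powr (\<alpha>+2) = c powr (-(\<alpha>+2))" by (subst powr_minus_divide) (simp add: powr_divide)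
      finally show ?thesis .
    qed
    show ?thesis
    proof (cases "a < 1")
      case True
      then have "q > 1" unfolding q_def using gt a by simp
      then obtain n :: nat where n: "n \<ge> 1" "2 \<le> q ^ n" using ex by blast
      show ?thesis unfolding uniformly_expansive_def
        using n fw by (intro exI[of _ n]) auto
    next
      case False
      then have "a > 1" using that by simp
      then have "q' > 1" unfolding q'_def using gt[of "1/a"] by simp
      then obtain n :: nat where n: "n \<ge> 1" "2 \<le> q' ^ n" using ex by blast
      show ?thesis unfolding uniformly_expansive_def
        using n bw by (intro exI[of _ n]) auto
    qed
  qed
  have e_ne: "a \<noteq> 1" if exX: "expansive X N T"
  proof
    assume a1: "a = 1"
    then have "q = 1" "q' = 1" unfolding q_def q'_def by simp_all
    obtain g where g: "g \<in> X" "N g = 1" using unit_vector[OF \<open>\<alpha> > -1\<close>] unfolding X_def N_def by blast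
    then obtain n :: nat where "N ((T ^^ n) g) \<ge> 2 \<or> N ((inv_into X T ^^ n) g) \<ge> 2"
      using exX g unfolding expansive_def by blast
    then show False using fw[OF g(1)] bw[OF g(1)] g(2) \<open>q = 1\<close> \<open>q' = 1\<close> by simp
  qed
  show ?thesis
    using ue ue_e e_ne unfolding X_def N_def T_def by blast
qed

end
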